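(* Let $M,N\ge3$ be integers with $M$ divisible by $(7^{N+1})!$. Let $I_1$ be the sequence consisting of $N$ batches of $M$ identical items each, with item sizes $\frac1{7^N},\frac1{7^{N-1}},\dots,\frac17$ in this order. Let $J_3$ be $I_1$ followed by $M$ items of size $\frac13$; let $J_2$ be $J_3$ followed by $M$ items of size $\frac12$; let $J_{22}$ be $J_3$ followed by $2M$ items of size $\frac12$; and let $J_1$ be $J_2$ followed by $M$ items of size $1$. Then $\mathrm{OPT}(J_3)\le\frac{3M}8$, $\mathrm{OPT}(J_2)\le\frac{2M}3$, $\mathrm{OPT}(J_{22})\le M$ and $\mathrm{OPT}(J_1)\le M$.
   Context: Ordered Open End Bin Packing: a sequence of items with sizes in $(0,1]$ must be packed into bins in sequence order, where an item may be added to a bin only if the bin's current total size is strictly below $1$; equivalently, in each bin the total size of all items except the one appearing last in the sequence is strictly below $1$. $\mathrm{OPT}(I)$ is the minimum number of bins of such a packing of the sequence $I$. *)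

theory Defs
  imports Complex_Main
begin

text \<open>Ordered Open End Bin Packing.\<close>

definition oe_valid_packing :: "real list \<Rightarrow> (nat \<Rightarrow> nat) \<Rightarrow> bool" where
  "oe_valid_packing xs f \<longleftrightarrow>
     (\<forall>i < length xs. (\<Sum>j \<in> {j. j < i \<and> f j = f i}. xs ! j) < 1)"

definition bins_used :: "real list \<Rightarrow> (nat \<Rightarrow> nat) \<Rightarrow> nat" where
  "bins_used xs f = card (f ` {..<length xs})"

definition OPT :: "real list \<Rightarrow> nat" where
  "OPT xs = (LEAST k. \<exists>f. oe_valid_packing xs f \<and> bins_used xs f = k)"

definition seqI1 :: "nat \<Rightarrow> nat \<Rightarrow> real list" where
  "seqI1 M N = concat (map (\<lambda>k. replicate M (1 / 7 ^ (N - k))) [0..<N])"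

end

theory Submission
  imports Defs
begin

definition batches :: "nat \<Rightarrow> (nat \<Rightarrow> real) \<Rightarrow> nat \<Rightarrow> real list" where
  "batches M c n = concat (map (\<lambda>k. replicate M (c k)) [0..<n])"

lemma batches_Suc: "batches M c (Suc n) = batches M c n @ replicate M (c n)"
  by (simp add: batches_def)

lemma batches_length: "length (batches M c n) = n * M"
  by (induct n) (auto simp: batches_Suc batches_def)

lemma batches_nth: "k < n \<Longrightarrow> r < M \<Longrightarrow> batches M c n ! (k*M + r) = c k"
proof (induct n)
  case 0 then show ?case by simp
next
  case (Suc n)
  show ?case
  proof (cases "k < n")
    case True
    have "k*M + r < n*M"
    proof -
      have "k*M + r < k*M + M" using Suc by simp
      also have "\<dots> = Suc k * M" by simp
      also have "\<dots> \<le> n * M" using True by (intro mult_le_mono1) simp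
      finally show ?thesis .
    qed
    then show ?thesis using Suc True by (simp add: batches_Suc nth_append batches_length)
  next
    case False
    then have "k = n" using Suc by simp
    then show ?thesis using Suc by (simp add: batches_Suc nth_append batches_length)
  qed
qed

lemma sum_if_card:
  fixes r :: nat
  shows   "(\<Sum>u<r. if P u then (a::real) else 0) = a * real (card {u. u < r \<and> P u})"
proof -
  have "(\<Sum>u<r. if P u then a else 0) = (\<Sum>u\<in>{u \<in> {..<r}. P u}. a)"
    by (rule sum.inter_filter[symmetric]) simp
  also have "{u \<in> {..<r}. P u} = {u. u < r \<and> P u}" by auto
  finally show ?thesis by (simp add: mult.commute)
qed

lemma batches_valid:
  assumes M: "M > 0"
  and cond: "\<And>k r. k < n \<Longrightarrow> r < M \<Longrightarrow>
     (\<Sum>k'<k. c k' * real (card {r'. r' < M \<and> g k' r' = g k r}))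
      + c k * real (card {r'. r' < r \<and> g k r' = g k r}) < 1"
  shows "oe_valid_packing (batches M c n) (\<lambda>j. g (j div M) (j mod M))"
  unfolding oe_valid_packing_def
proof (intro allI impI)
  fix i assume i: "i < length (batches M c n)"
  define k where "k = i div M"
  define r where "r = i mod M"
  define f where "f = (\<lambda>j. g (j div M) (j mod M))"
  define xs where "xs = batches M c n"
  define b where "b = g k r"
  have ieq: "i = k*M + r" unfolding k_def r_def by simp
  have rM: "r < M" unfolding r_def using M by simp
  have kn: "k < n" using i unfolding k_def batches_length
    by (simp add: less_mult_imp_div_less)
  have fi: "f i = b" unfolding f_def b_def k_def r_def by simp
  define F where "F = (\<lambda>j. if f j = b then xs ! j else 0)"
  have "(\<Sum>j\<in>{j. j < i \<and> f j = f i}. xs ! j) = (\<Sum>j<i. F j)"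
  proof -
    have "{j. j < i \<and> f j = f i} = {j \<in> {..<i}. f j = b}" using fi by auto
    then show ?thesis unfolding F_def by (simp only: sum.inter_filter[OF finite_lessThan])
  qed
  also have "(\<Sum>j<i. F j) = (\<Sum>j<k*M. F j) + (\<Sum>j\<in>{k*M..<k*M+r}. F j)"
    unfolding ieq
    by (metis atLeast0LessThan le_add1 sum.atLeastLessThan_concat zero_le)
  also have "(\<Sum>j<k*M. F j) = (\<Sum>k'<k. \<Sum>j\<in>{k'*M..<k'*M+M}. F j)"
    by (simp add: sum.nat_group)
  also have "\<dots> = (\<Sum>k'<k. c k' * real (card {r'. r' < M \<and> g k' r' = b}))"
  proof (rule sum.cong[OF refl])
    fix k' assume "k' \<in> {..<k}"
    then have k': "k' < n" using kn by simp
    have "(\<Sum>j\<in>{k'*M..<k'*M+M}. F j) = (\<Sum>u\<in>{0+k'*M..<M+k'*M}. F u)"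
      by (simp add: add.commute)
    also have "\<dots> = (\<Sum>u<M. F (u + k'*M))"
      by (simp only: sum.shift_bounds_nat_ivl atLeast0LessThan)
    also have "\<dots> = (\<Sum>u<M. if g k' u = b then c k' else 0)"
    proof (rule sum.cong[OF refl])
      fix u assume "u \<in> {..<M}"
      then have u: "u < M" by simp
      have d: "(u + k'*M) div M = k'" "(u + k'*M) mod M = u" using u M by auto
      show "F (u + k'*M) = (if g k' u = b then c k' else 0)"
        unfolding F_def f_def xs_def d using batches_nth[OF k' u, of c]
        by (simp add: add.commute)
    qed
    also have "\<dots> = c k' * real (card {r'. r' < M \<and> g k' r' = b})"
      by (rule sum_if_card)
    finally show "(\<Sum>j\<in>{k'*M..<k'*M+M}. F j) = c k' * real (card {r'. r' < M \<and> g k' r' = b})" .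
  qed
  also have "(\<Sum>j\<in>{k*M..<k*M+r}. F j) = c k * real (card {r'. r' < r \<and> g k r' = b})"
  proof -
    have "(\<Sum>j\<in>{k*M..<k*M+r}. F j) = (\<Sum>u\<in>{0+k*M..<r+k*M}. F u)"
      by (simp add: add.commute)
    also have "\<dots> = (\<Sum>u<r. F (u + k*M))"
      by (simp only: sum.shift_bounds_nat_ivl atLeast0LessThan)
    also have "\<dots> = (\<Sum>u<r. if g k u = b then c k else 0)"
    proof (rule sum.cong[OF refl])
      fix u assume "u \<in> {..<r}"
      then have u: "u < M" using rM by simp
      have d: "(u + k*M) div M = k" "(u + k*M) mod M = u" using u M by auto
      show "F (u + k*M) = (if g k u = b then c k else 0)"
        unfolding F_def f_def xs_def d using batches_nth[OF kn u, of c]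
        by (simp add: add.commute)
    qed
    also have "\<dots> = c k * real (card {r'. r' < r \<and> g k r' = b})"
      by (rule sum_if_card)
    finally show ?thesis .
  qed
  finally show "(\<Sum>j\<in>{j. j < i \<and> f j = f i}. xs ! j) < 1"
    using cond[OF kn rM] unfolding b_def by simp
qed

lemma batches_OPT:
  assumes M: "M > 0"
  and cond: "\<And>k r. k < n \<Longrightarrow> r < M \<Longrightarrow>
     (\<Sum>k'<k. c k' * real (card {r'. r' < M \<and> g k' r' = g k r}))
      + c k * real (card {r'. r' < r \<and> g k r' = g k r}) < 1"
  and B: "\<And>k r. k < n \<Longrightarrow> r < M \<Longrightarrow> g k r < B"
  shows "OPT (batches M c n) \<le> B"
proof -
  let ?f = "\<lambda>j. g (j div M) (j mod M)"
  have v: "oe_valid_packing (batches M c n) ?f" by (rule batches_valid[OF M cond])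
  have "?f ` {..<length (batches M c n)} \<subseteq> {..<B}"
  proof
    fix y assume "y \<in> ?f ` {..<length (batches M c n)}"
    then obtain j where j: "j < n * M" "y = ?f j" by (auto simp: batches_length)
    have "j div M < n" using j M by (simp add: less_mult_imp_div_less)
    moreover have "j mod M < M" using M by simp
    ultimately show "y \<in> {..<B}" using B j by simp
  qed
  then have "bins_used (batches M c n) ?f \<le> B"
    unfolding bins_used_def by (metis card_lessThan card_mono finite_lessThan)
  moreover have "OPT (batches M c n) \<le> bins_used (batches M c n) ?f"
    unfolding OPT_def by (rule Least_le) (use v in blast)
  ultimately show ?thesis by simp
qed

lemma card_bounds:
  assumes "\<And>r'. r' < M \<Longrightarrow> G r' = b \<Longrightarrow> x \<le> r' \<and> r' < x + K"
  shows "card {r'. r' < M \<and> G r' = b} \<le> K"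
    and "r < M \<Longrightarrow> G r = b \<Longrightarrow> card {r'. r' < r \<and> G r' = b} \<le> K - 1"
proof -
  have "{r'. r' < M \<and> G r' = b} \<subseteq> {x..<x+K}" using assms by auto
  then show "card {r'. r' < M \<and> G r' = b} \<le> K"
    by (metis card_atLeastLessThan card_mono diff_add_inverse finite_atLeastLessThan)
next
  assume r: "r < M" "G r = b"
  have "{r'. r' < r \<and> G r' = b} \<subseteq> {x..<r}" using assms r by auto
  then have "card {r'. r' < r \<and> G r' = b} \<le> r - x"
    by (metis card_atLeastLessThan card_mono finite_atLeastLessThan)
  also have "\<dots> \<le> K - 1" using assms[OF r] by arith
  finally show "card {r'. r' < r \<and> G r' = b} \<le> K - 1" .
qed


definition ss :: "nat \<Rightarrow> real" where "ss N = (\<Sum>k<N. 1 / 7 ^ (N - k))"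

lemma ss_Suc: "ss (Suc N) = ss N / 7 + 1/7"
proof -
  have "ss (Suc N) = (\<Sum>k<N. (1::real) / 7 ^ (Suc N - k)) + 1/7"
    unfolding ss_def by simp
  also have "(\<Sum>k<N. (1::real) / 7 ^ (Suc N - k)) = (\<Sum>k<N. (1 / 7 ^ (N - k)) / 7)"
    by (rule sum.cong[OF refl]) (simp add: Suc_diff_le)
  also have "\<dots> = ss N / 7" unfolding ss_def by (simp add: sum_divide_distrib)
  finally show ?thesis .
qed

lemma ss_lt: "ss N < 1/6"
  by (induct N) (auto simp: ss_Suc, simp add: ss_def)

lemma ss_partial: "m \<le> N \<Longrightarrow> (\<Sum>k<m. 1 / 7 ^ (N - k)) \<le> (ss N :: real)"
  unfolding ss_def by (rule sum_mono2) auto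

lemma ss_nonneg: "0 \<le> ss N"
  unfolding ss_def by (rule sum_nonneg) simp

lemma phase_small:
  fixes K :: real
  assumes k: "k < N"
  and g: "\<And>k'. k' < N \<Longrightarrow> g k' = G"
  and c: "\<And>k'. k' < N \<Longrightarrow> c k' = 1 / 7 ^ (N - k')"
  and C1: "real (card {r'. r' < M \<and> G r' = b}) \<le> K"
  and C2: "real (card {r'. r' < r \<and> G r' = b}) \<le> K"
  shows "(\<Sum>k'<k. c k' * real (card {r'. r' < M \<and> g k' r' = b}))
      + c k * real (card {r'. r' < r \<and> g k r' = b}) \<le> K * ss N"
proof -
  have "(\<Sum>k'<k. c k' * real (card {r'. r' < M \<and> g k' r' = b}))
      \<le> (\<Sum>k'<k. K * (1 / 7 ^ (N - k')))"
  proof (rule sum_mono)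
    fix k' assume "k' \<in> {..<k}"
    then have "k' < N" using k by simp
    then show "c k' * real (card {r'. r' < M \<and> g k' r' = b}) \<le> K * (1 / 7 ^ (N - k'))"
      using g c C1 by (simp add: divide_right_mono)
  qed
  moreover have "c k * real (card {r'. r' < r \<and> g k r' = b}) \<le> K * (1 / 7 ^ (N - k))"
    using g[OF k] c[OF k] C2 by (simp add: divide_right_mono)
  ultimately have "(\<Sum>k'<k. c k' * real (card {r'. r' < M \<and> g k' r' = b}))
      + c k * real (card {r'. r' < r \<and> g k r' = b}) \<le> (\<Sum>k'<k. K * (1 / 7 ^ (N - k'))) + K * (1 / 7 ^ (N - k))"
    by (rule add_mono)
  also have "\<dots> = K * (\<Sum>k'<Suc k. 1 / 7 ^ (N - k'))"
    by (simp add: sum_distrib_left distrib_left)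
  also have "\<dots> \<le> K * ss N"
  proof -
    have "0 \<le> K" using C1 by (meson of_nat_0_le_iff order_trans)
    then show ?thesis using ss_partial[of "Suc k" N] k by (simp add: mult_left_mono)
  qed
  finally show ?thesis .
qed

lemma phase_full:
  assumes g: "\<And>k'. k' < N \<Longrightarrow> g k' = G"
  and c: "\<And>k'. k' < N \<Longrightarrow> c k' = 1 / 7 ^ (N - k')"
  shows "(\<Sum>k'<N. c k' * real (card {r'. r' < M \<and> g k' r' = b}))
      = real (card {r'. r' < M \<and> G r' = b}) * ss N"
  unfolding ss_def sum_distrib_left
  by (rule sum.cong[OF refl]) (simp add: g c)

lemma seqI1_batches:
  assumes "\<And>k. k < N \<Longrightarrow> c k = 1 / 7 ^ (N - k)"
  shows "seqI1 M N = batches M c N"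
  unfolding seqI1_def batches_def using assms by (intro arg_cong[where f=concat] map_cong) auto


lemma uniform_OPT:
  assumes M: "M > 0" and c: "\<And>k. c k \<ge> 0" and S: "(\<Sum>k'<m. c k') < 1"
  shows "OPT (batches M c (Suc m)) \<le> M"
proof (rule batches_OPT[where g="\<lambda>k r. r"])
  fix k r assume k: "k < Suc m" and r: "r < M"
  have e1: "{r'. r' < M \<and> r' = r} = {r}" using r by auto
  have e2: "{r'. r' < r \<and> r' = r} = {}" by auto
  have "(\<Sum>k'<k. c k') \<le> (\<Sum>k'<m. c k')" using k by (intro sum_mono2) (auto simp: c)
  then show "(\<Sum>k'<k. c k' * real (card {r'. r' < M \<and> r' = r})) +
          c k * real (card {r'. r' < r \<and> r' = r}) < 1"
    unfolding e1 e2 using S by simp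
qed (use M in auto)

definition c1 :: "nat \<Rightarrow> nat \<Rightarrow> real" where
  "c1 N k = (if k < N then 1 / 7 ^ (N - k) else if k = N then 1/3 else if k = Suc N then 1/2 else 1)"

lemma c1_sum: "(\<Sum>k'<Suc (Suc N). c1 N k') = ss N + 1/3 + 1/2"
proof -
  have "(\<Sum>k'<N. c1 N k') = ss N" unfolding ss_def c1_def by (rule sum.cong) auto
  then show ?thesis by (simp add: c1_def)
qed

lemma J1_OPT: assumes "M > 0"
  shows "OPT (seqI1 M N @ replicate M (1/3) @ replicate M (1/2) @ replicate M 1) \<le> M"
proof -
  have "seqI1 M N @ replicate M (1/3) @ replicate M (1/2) @ replicate M 1 = batches M (c1 N) (Suc (Suc (Suc N)))"
    using seqI1_batches[of N "c1 N" M] by (simp add: batches_Suc c1_def)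
  moreover have "OPT (batches M (c1 N) (Suc (Suc (Suc N)))) \<le> M"
    using uniform_OPT[OF assms, of "c1 N" "Suc (Suc N)"] c1_sum[of N] ss_lt[of N]
    by (simp add: c1_def)
  ultimately show ?thesis by simp
qed

definition c2 :: "nat \<Rightarrow> nat \<Rightarrow> real" where
  "c2 N k = (if k < N then 1 / 7 ^ (N - k) else if k = N then 1/3 else 1/2)"

lemma c2_sum: "(\<Sum>k'<Suc (Suc N). c2 N k') = ss N + 1/3 + 1/2"
proof -
  have "(\<Sum>k'<N. c2 N k') = ss N" unfolding ss_def c2_def by (rule sum.cong) auto
  then show ?thesis by (simp add: c2_def)
qed

lemma J22_OPT: assumes "M > 0"
  shows "OPT (seqI1 M N @ replicate M (1/3) @ replicate (2 * M) (1/2)) \<le> M"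
proof -
  have "seqI1 M N @ replicate M (1/3) @ replicate (2*M) (1/2) = batches M (c2 N) (Suc (Suc (Suc N)))"
    using seqI1_batches[of N "c2 N" M] by (simp add: batches_Suc c2_def mult_2 replicate_add)
  moreover have "OPT (batches M (c2 N) (Suc (Suc (Suc N)))) \<le> M"
    using uniform_OPT[OF assms, of "c2 N" "Suc (Suc N)"] c2_sum[of N] ss_lt[of N]
    by (simp add: c2_def)
  ultimately show ?thesis by simp
qed


definition h3a :: "nat \<Rightarrow> nat \<Rightarrow> nat" where
  "h3a q r = (if r < 4*q then r div 2 else 2*q + (r - 4*q) div 4)"
definition h3b :: "nat \<Rightarrow> nat \<Rightarrow> nat" where
  "h3b q r = (if r < 6*q then r div 3 else 2*q + (r - 6*q) div 2)"
definition g3 :: "nat \<Rightarrow> nat \<Rightarrow> nat \<Rightarrow> nat \<Rightarrow> nat" where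
  "g3 N q k = (if k < N then h3a q else h3b q)"
definition c3 :: "nat \<Rightarrow> nat \<Rightarrow> real" where
  "c3 N k = (if k < N then 1 / 7 ^ (N - k) else 1/3)"

lemma divb: "(d::nat) > 0 \<Longrightarrow> d * (n div d) \<le> n \<and> n < d * (n div d) + d"
proof -
  assume d: "d > 0"
  have "d * (n div d) + n mod d = n" by (rule mult_div_mod_eq)
  moreover have "n mod d < d" using d by simp
  ultimately show ?thesis by linarith
qed

lemma h3a_lo: "b < 2*q \<Longrightarrow> r' < 8*q \<Longrightarrow> h3a q r' = b \<Longrightarrow> 2*b \<le> r' \<and> r' < 2*b + 2"
  unfolding h3a_def using divb[of 2 r'] divb[of 4 "r' - 4*q"] by (simp split: if_splits; linarith)
lemma h3a_hi: "\<not> b < 2*q \<Longrightarrow> r' < 8*q \<Longrightarrow> h3a q r' = b \<Longrightarrow> 4*b-4*q \<le> r' \<and> r' < (4*b-4*q) + 4"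
  unfolding h3a_def using divb[of 2 r'] divb[of 4 "r' - 4*q"] by (simp split: if_splits; linarith)
lemma h3b_lo: "b < 2*q \<Longrightarrow> r' < 8*q \<Longrightarrow> h3b q r' = b \<Longrightarrow> 3*b \<le> r' \<and> r' < 3*b + 3"
  unfolding h3b_def using divb[of 3 r'] divb[of 2 "r' - 6*q"] by (simp split: if_splits; linarith)
lemma h3b_hi: "\<not> b < 2*q \<Longrightarrow> r' < 8*q \<Longrightarrow> h3b q r' = b \<Longrightarrow> 2*b+2*q \<le> r' \<and> r' < (2*b+2*q) + 2"
  unfolding h3b_def using divb[of 3 r'] divb[of 2 "r' - 6*q"] by (simp split: if_splits; linarith)

lemma h3_range: "r < 8*q \<Longrightarrow> h3a q r < 3*q" "r < 8*q \<Longrightarrow> h3b q r < 3*q"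
  unfolding h3a_def h3b_def using divb[of 2 r] divb[of 4 "r - 4*q"] divb[of 3 r] divb[of 2 "r - 6*q"]
  by (simp_all split: if_splits; linarith)+

lemma J3_OPT: assumes q: "q > 0"
  shows "OPT (seqI1 (8*q) N @ replicate (8*q) (1/3)) \<le> 3*q"
proof -
  have eq: "seqI1 (8*q) N @ replicate (8*q) (1/3) = batches (8*q) (c3 N) (Suc N)"
    using seqI1_batches[of N "c3 N" "8*q"] by (simp add: batches_Suc c3_def)
  have ss: "ss N < 1/6" "0 \<le> ss N" by (rule ss_lt, rule ss_nonneg)
  have "OPT (batches (8*q) (c3 N) (Suc N)) \<le> 3*q"
  proof (rule batches_OPT[where g="g3 N q"])
    fix k r assume k: "k < Suc N" and r: "r < 8*q"
    show "(\<Sum>k'<k. c3 N k' * real (card {r'. r' < 8*q \<and> g3 N q k' r' = g3 N q k r})) +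
          c3 N k * real (card {r'. r' < r \<and> g3 N q k r' = g3 N q k r}) < 1"
    proof (cases "k < N")
      case True
      define b where "b = h3a q r"
      have gk: "g3 N q k r = b" using True unfolding b_def g3_def by simp
      have C1: "card {r'. r' < 8*q \<and> h3a q r' = b} \<le> 4"
      proof (cases "b < 2*q")
        case True then show ?thesis
          using card_bounds(1)[of "8*q" "h3a q" b "2*b" 2] h3a_lo[OF True] by fastforce
      next
        case False then show ?thesis
          using card_bounds(1)[of "8*q" "h3a q" b "4*b-4*q" 4] h3a_hi[OF False] by fastforce
      qed
      have C2: "card {r'. r' < r \<and> h3a q r' = b} \<le> 4"
      proof (cases "b < 2*q")
        case True then show ?thesis
          using card_bounds(2)[of "8*q" "h3a q" b "2*b" 2 r] h3a_lo[OF True] r b_def by fastforce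
      next
        case False then show ?thesis
          using card_bounds(2)[of "8*q" "h3a q" b "4*b-4*q" 4 r] h3a_hi[OF False] r b_def by fastforce
      qed
      have "(\<Sum>k'<k. c3 N k' * real (card {r'. r' < 8*q \<and> g3 N q k' r' = b})) +
          c3 N k * real (card {r'. r' < r \<and> g3 N q k r' = b}) \<le> 4 * ss N"
        by (rule phase_small[OF True, where G="h3a q"]) (use C1 C2 in \<open>auto simp: g3_def c3_def\<close>)
      then show ?thesis unfolding gk using ss by linarith
    next
      case False
      then have kN: "k = N" using k by simp
      define b where "b = h3b q r"
      have gk: "g3 N q N r = b" unfolding b_def g3_def by simp
      have full: "(\<Sum>k'<N. c3 N k' * real (card {r'. r' < 8*q \<and> g3 N q k' r' = b}))
          = real (card {r'. r' < 8*q \<and> h3a q r' = b}) * ss N"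
        by (rule phase_full) (auto simp: g3_def c3_def)
      have last: "c3 N N * real (card {r'. r' < r \<and> g3 N q N r' = b})
          = 1/3 * real (card {r'. r' < r \<and> h3b q r' = b})"
        by (simp add: g3_def c3_def)
      have key: "real (card {r'. r' < 8*q \<and> h3a q r' = b}) * ss N + 1/3 * real (card {r'. r' < r \<and> h3b q r' = b}) < 1"
      proof (cases "b < 2*q")
        case True
        have C1: "card {r'. r' < 8*q \<and> h3a q r' = b} \<le> 2"
          using card_bounds(1)[of "8*q" "h3a q" b "2*b" 2] h3a_lo[OF True] by blast
        have C2: "card {r'. r' < r \<and> h3b q r' = b} \<le> 2"
          using card_bounds(2)[of "8*q" "h3b q" b "3*b" 3 r] h3b_lo[OF True] r b_def by fastforce
        have "real (card {r'. r' < 8*q \<and> h3a q r' = b}) * ss N \<le> 2 * ss N"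
          using C1 ss by (intro mult_right_mono) auto
        moreover have "real (card {r'. r' < r \<and> h3b q r' = b}) \<le> 2" using C2 by simp
        ultimately show ?thesis using ss by linarith
      next
        case False
        have C1: "card {r'. r' < 8*q \<and> h3a q r' = b} \<le> 4"
          using card_bounds(1)[of "8*q" "h3a q" b "4*b-4*q" 4] h3a_hi[OF False] by blast
        have C2: "card {r'. r' < r \<and> h3b q r' = b} \<le> 1"
          using card_bounds(2)[of "8*q" "h3b q" b "2*b+2*q" 2 r] h3b_hi[OF False] r b_def by fastforce
        have "real (card {r'. r' < 8*q \<and> h3a q r' = b}) * ss N \<le> 4 * ss N"
          using C1 ss by (intro mult_right_mono) auto
        moreover have "real (card {r'. r' < r \<and> h3b q r' = b}) \<le> 1" using C2 by simp
        ultimately show ?thesis using ss by linarith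
      qed
      then show ?thesis unfolding kN gk full last .
    qed
  next
    fix k r assume "k < Suc N" "r < 8*q"
    then show "g3 N q k r < 3*q" using h3_range by (simp add: g3_def)
  qed (use q in simp)
  then show ?thesis using eq by simp
qed


definition h2a :: "nat \<Rightarrow> nat \<Rightarrow> nat" where
  "h2a p r = (if r < 2*p then r div 2 else r - p)"
definition h2b :: "nat \<Rightarrow> nat \<Rightarrow> nat" where
  "h2b p r = (if r < p then r else p + (r - p) div 2)"
definition g2 :: "nat \<Rightarrow> nat \<Rightarrow> nat \<Rightarrow> nat \<Rightarrow> nat" where
  "g2 N p k = (if k \<le> N then h2a p else h2b p)"

lemma h2a_lo: "b < p \<Longrightarrow> r' < 3*p \<Longrightarrow> h2a p r' = b \<Longrightarrow> 2*b \<le> r' \<and> r' < 2*b + 2"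
  unfolding h2a_def using divb[of 2 r'] by (simp split: if_splits; linarith)
lemma h2a_hi: "\<not> b < p \<Longrightarrow> r' < 3*p \<Longrightarrow> h2a p r' = b \<Longrightarrow> b+p \<le> r' \<and> r' < (b+p) + 1"
  unfolding h2a_def using divb[of 2 r'] by (simp split: if_splits; linarith)
lemma h2b_lo: "b < p \<Longrightarrow> r' < 3*p \<Longrightarrow> h2b p r' = b \<Longrightarrow> b \<le> r' \<and> r' < b + 1"
  unfolding h2b_def using divb[of 2 "r' - p"] by (simp split: if_splits; linarith)
lemma h2b_hi: "\<not> b < p \<Longrightarrow> r' < 3*p \<Longrightarrow> h2b p r' = b \<Longrightarrow> 2*b-p \<le> r' \<and> r' < (2*b-p) + 2"
  unfolding h2b_def using divb[of 2 "r' - p"] by (simp split: if_splits; linarith)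

lemma h2_range: "r < 3*p \<Longrightarrow> h2a p r < 2*p" "r < 3*p \<Longrightarrow> h2b p r < 2*p"
  unfolding h2a_def h2b_def using divb[of 2 r] divb[of 2 "r - p"]
  by (simp_all split: if_splits; linarith)+

lemma h2a_card: "card {r'. r' < 3*p \<and> h2a p r' = b} \<le> (if b < p then 2 else 1)"
proof (cases "b < p")
  case True then show ?thesis
    using card_bounds(1)[of "3*p" "h2a p" b "2*b" 2] h2a_lo[OF True] by fastforce
next
  case False then show ?thesis
    using card_bounds(1)[of "3*p" "h2a p" b "b+p" 1] h2a_hi[OF False] by fastforce
qed

lemma h2a_card2: "r < 3*p \<Longrightarrow> h2a p r = b \<Longrightarrow> card {r'. r' < r \<and> h2a p r' = b} \<le> (if b < p then 1 else 0)"
proof (cases "b < p")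
  case True assume "r < 3*p" "h2a p r = b" then show ?thesis
    using card_bounds(2)[of "3*p" "h2a p" b "2*b" 2 r] h2a_lo[OF True] True by fastforce
next
  case False assume "r < 3*p" "h2a p r = b" then show ?thesis
    using card_bounds(2)[of "3*p" "h2a p" b "b+p" 1 r] h2a_hi[OF False] False by fastforce
qed

lemma h2b_card2: "r < 3*p \<Longrightarrow> h2b p r = b \<Longrightarrow> card {r'. r' < r \<and> h2b p r' = b} \<le> (if b < p then 0 else 1)"
proof (cases "b < p")
  case True assume "r < 3*p" "h2b p r = b" then show ?thesis
    using card_bounds(2)[of "3*p" "h2b p" b "b" 1 r] h2b_lo[OF True] True by fastforce
next
  case False assume "r < 3*p" "h2b p r = b" then show ?thesis
    using card_bounds(2)[of "3*p" "h2b p" b "2*b-p" 2 r] h2b_hi[OF False] False by fastforce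
qed

lemma J2_OPT: assumes p: "p > 0"
  shows "OPT (seqI1 (3*p) N @ replicate (3*p) (1/3) @ replicate (3*p) (1/2)) \<le> 2*p"
proof -
  have eq: "seqI1 (3*p) N @ replicate (3*p) (1/3) @ replicate (3*p) (1/2) = batches (3*p) (c2 N) (Suc (Suc N))"
    using seqI1_batches[of N "c2 N" "3*p"] by (simp add: batches_Suc c2_def)
  have ss: "ss N < 1/6" "0 \<le> ss N" by (rule ss_lt, rule ss_nonneg)
  have full: "\<And>b. (\<Sum>k'<N. c2 N k' * real (card {r'. r' < 3*p \<and> g2 N p k' r' = b}))
          = real (card {r'. r' < 3*p \<and> h2a p r' = b}) * ss N"
    by (rule phase_full) (auto simp: g2_def c2_def)
  have "OPT (batches (3*p) (c2 N) (Suc (Suc N))) \<le> 2*p"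
  proof (rule batches_OPT[where g="g2 N p"])
    fix k r assume k: "k < Suc (Suc N)" and r: "r < 3*p"
    show "(\<Sum>k'<k. c2 N k' * real (card {r'. r' < 3*p \<and> g2 N p k' r' = g2 N p k r})) +
          c2 N k * real (card {r'. r' < r \<and> g2 N p k r' = g2 N p k r}) < 1"
    proof (cases "k < N")
      case True
      define b where "b = h2a p r"
      have gk: "g2 N p k r = b" using True unfolding b_def g2_def by simp
      have C1: "real (card {r'. r' < 3*p \<and> h2a p r' = b}) \<le> 2"
        using h2a_card[of p b] by (simp split: if_splits)
      have c: "card {r'. r' < r \<and> h2a p r' = b} \<le> (if b < p then 1 else 0)"
        by (rule h2a_card2) (use r b_def in auto)
      have C2: "real (card {r'. r' < r \<and> h2a p r' = b}) \<le> 2"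
        using le_trans[OF c, of 2] by simp
      have "(\<Sum>k'<k. c2 N k' * real (card {r'. r' < 3*p \<and> g2 N p k' r' = b})) +
          c2 N k * real (card {r'. r' < r \<and> g2 N p k r' = b}) \<le> 2 * ss N"
        by (rule phase_small[OF True, where G="h2a p"]) (use C1 C2 in \<open>auto simp: g2_def c2_def\<close>)
      then show ?thesis unfolding gk using ss by linarith
    next
      case False
      then consider "k = N" | "k = Suc N" using k by linarith
      then show ?thesis
      proof cases
        case 1
        define b where "b = h2a p r"
        have gk: "g2 N p N r = b" unfolding b_def g2_def by simp
        have last: "c2 N N * real (card {r'. r' < r \<and> g2 N p N r' = b})
            = 1/3 * real (card {r'. r' < r \<and> h2a p r' = b})"
          by (simp add: g2_def c2_def)
        have C1: "real (card {r'. r' < 3*p \<and> h2a p r' = b}) \<le> (if b < p then 2 else 1)"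
          using h2a_card[of p b] by (simp split: if_splits)
        have C2: "real (card {r'. r' < r \<and> h2a p r' = b}) \<le> (if b < p then 1 else 0)"
          using h2a_card2[of r p b] r b_def by (simp split: if_splits)
        have key: "real (card {r'. r' < 3*p \<and> h2a p r' = b}) * ss N + 1/3 * real (card {r'. r' < r \<and> h2a p r' = b}) < 1"
        proof -
          have "real (card {r'. r' < 3*p \<and> h2a p r' = b}) * ss N \<le> 2 * ss N"
            using C1 ss by (intro mult_right_mono) (auto split: if_splits)
          moreover have "real (card {r'. r' < r \<and> h2a p r' = b}) \<le> 1" using order_trans[OF C2, of 1] by simp
          ultimately show ?thesis using ss by linarith
        qed
        then show ?thesis unfolding 1 gk full last .
      next
        case 2
        define b where "b = h2b p r"
        have gk: "g2 N p (Suc N) r = b" unfolding b_def g2_def by simp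
        have last: "c2 N (Suc N) * real (card {r'. r' < r \<and> g2 N p (Suc N) r' = b})
            = 1/2 * real (card {r'. r' < r \<and> h2b p r' = b})"
          by (simp add: g2_def c2_def)
        have mid: "(\<Sum>k'<Suc N. c2 N k' * real (card {r'. r' < 3*p \<and> g2 N p k' r' = b}))
            = real (card {r'. r' < 3*p \<and> h2a p r' = b}) * ss N + 1/3 * real (card {r'. r' < 3*p \<and> h2a p r' = b})"
          using full[of b] by (simp add: g2_def c2_def)
        have C1: "real (card {r'. r' < 3*p \<and> h2a p r' = b}) \<le> (if b < p then 2 else 1)"
          using h2a_card[of p b] by (simp split: if_splits)
        have C2: "real (card {r'. r' < r \<and> h2b p r' = b}) \<le> (if b < p then 0 else 1)"
          using h2b_card2[of r p b] r b_def by (simp split: if_splits)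
        have key: "real (card {r'. r' < 3*p \<and> h2a p r' = b}) * ss N + 1/3 * real (card {r'. r' < 3*p \<and> h2a p r' = b})
           + 1/2 * real (card {r'. r' < r \<and> h2b p r' = b}) < 1"
        proof (cases "b < p")
          case True
          have "real (card {r'. r' < 3*p \<and> h2a p r' = b}) * ss N \<le> 2 * ss N"
            using C1 ss True by (intro mult_right_mono) auto
          moreover have e: "{r'. r' < r \<and> h2b p r' = b} = {}" using C2 True by auto
          then have "real (card {r'. r' < r \<and> h2b p r' = b}) = 0" by (simp only: card.empty of_nat_0)
          moreover have "real (card {r'. r' < 3*p \<and> h2a p r' = b}) \<le> 2" using C1 True by simp
          ultimately show ?thesis using ss by linarith
        next
          case False
          have "real (card {r'. r' < 3*p \<and> h2a p r' = b}) * ss N \<le> 1 * ss N"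
            using C1 ss False by (intro mult_right_mono) auto
          moreover have "real (card {r'. r' < r \<and> h2b p r' = b}) \<le> 1" using order_trans[OF C2, of 1] by simp
          moreover have "real (card {r'. r' < 3*p \<and> h2a p r' = b}) \<le> 1" using C1 False by simp
          ultimately show ?thesis using ss by linarith
        qed
        then show ?thesis unfolding 2 gk mid last .
      qed
    qed
  next
    fix k r assume "k < Suc (Suc N)" "r < 3*p"
    then show "g2 N p k r < 2*p" using h2_range by (simp add: g2_def)
  qed (use p in simp)
  then show ?thesis using eq by simp
qed


theorem mainTheorem11:
  fixes M N :: nat
  assumes "M \<ge> 3" and "N \<ge> 3" and "fact (7 ^ (N + 1)) dvd M"
  shows "real (OPT (seqI1 M N @ replicate M (1/3))) \<le> 3 * real M / 8
       \<and> real (OPT (seqI1 M N @ replicate M (1/3) @ replicate M (1/2))) \<le> 2 * real M / 3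
       \<and> real (OPT (seqI1 M N @ replicate M (1/3) @ replicate (2 * M) (1/2))) \<le> real M
       \<and> real (OPT (seqI1 M N @ replicate M (1/3) @ replicate M (1/2) @ replicate M 1)) \<le> real M"
proof -
  have f4: "fact 4 = (24::nat)" by (simp add: fact_numeral)
  have "(4::nat) \<le> 7 ^ (N + 1)"
  proof -
    have "(1::nat) \<le> 7 ^ N" by simp
    moreover have "(7::nat) ^ (N + 1) = 7 * 7 ^ N" by simp
    ultimately show ?thesis by linarith
  qed
  then have "fact 4 dvd (fact (7 ^ (N + 1)) :: nat)" by (rule fact_dvd)
  then have "(24::nat) dvd M" using assms(3) f4 by (metis dvd_trans)
  then obtain t where t: "M = 24 * t" by blast
  have tp: "t > 0" using t assms(1) by simp
  have M0: "M > 0" using assms(1) by simp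
  have a: "OPT (seqI1 M N @ replicate M (1/3)) \<le> 3 * (3*t)"
    using J3_OPT[of "3*t" N] tp t by simp
  have b: "OPT (seqI1 M N @ replicate M (1/3) @ replicate M (1/2)) \<le> 2 * (8*t)"
    using J2_OPT[of "8*t" N] tp t by simp
  have c: "OPT (seqI1 M N @ replicate M (1/3) @ replicate (2 * M) (1/2)) \<le> M"
    by (rule J22_OPT[OF M0])
  have d: "OPT (seqI1 M N @ replicate M (1/3) @ replicate M (1/2) @ replicate M 1) \<le> M"
    by (rule J1_OPT[OF M0])
  have a': "real (OPT (seqI1 M N @ replicate M (1/3))) \<le> 3 * real M / 8"
    using a t by (simp add: of_nat_le_iff[symmetric, where 'a=real])
  have b': "real (OPT (seqI1 M N @ replicate M (1/3) @ replicate M (1/2))) \<le> 2 * real M / 3"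
    using b t by (simp add: of_nat_le_iff[symmetric, where 'a=real])
  show ?thesis using a' b' c d by simp
qed

end
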